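(* Let $n,k\ge 1$ be integers and let $X=\{0,1,\ldots,k\}^n$ with the $\ell_1$-metric. Suppose $X=X_1\cup\cdots\cup X_n$ and that for every point $x\in X$ the open ball of radius $n+1$ about $x$ is contained in some $X_i$. Then there is an index $i$ such that some $2$-component of $X_i$ contains two points whose $i$-th coordinates differ by $k$.
   Context: For $Y\subseteq X$ and $r>0$, two points of $Y$ lie in the same $r$-component of $Y$ if there is a sequence $y_0,\dots,y_m$ in $Y$ from one to the other with $d(y_j,y_{j+1})<r$ for all $j$. *)

theory Defs
  imports Main
begin

text \<open>The grid X = {0,...,k}^n, points as functions nat => nat with coordinates
  indexed by 0..n-1 (coordinate i < n), and value 0 outside the index range.\<close>
definition grid :: "nat \<Rightarrow> nat \<Rightarrow> (nat \<Rightarrow> nat) set" where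
  "grid n k = {x. (\<forall>i<n. x i \<le> k) \<and> (\<forall>i\<ge>n. x i = 0)}"

definition l1dist :: "nat \<Rightarrow> (nat \<Rightarrow> nat) \<Rightarrow> (nat \<Rightarrow> nat) \<Rightarrow> int" where
  "l1dist n x y = (\<Sum>i<n. \<bar>int (x i) - int (y i)\<bar>)"

definition same_rcomp ::
  "('a \<Rightarrow> 'a \<Rightarrow> int) \<Rightarrow> 'a set \<Rightarrow> int \<Rightarrow> 'a \<Rightarrow> 'a \<Rightarrow> bool" where
  "same_rcomp d Y r a b =
     (\<exists>ys::'a list. ys \<noteq> [] \<and> hd ys = a \<and> last ys = b \<and> set ys \<subseteq> Y \<and>
        (\<forall>j. Suc j < length ys \<longrightarrow> d (ys ! j) (ys ! Suc j) < r))"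

end

theory Submission
  imports Defs "HOL-Analysis.Analysis"
begin

lemma src_refl: "y \<in> Y \<Longrightarrow> same_rcomp d Y r y y"
  unfolding same_rcomp_def by (rule exI[of _ "[y]"]) auto

lemma src_cons:
  assumes "x \<in> Y" "d x a < r" "same_rcomp d Y r a b"
  shows "same_rcomp d Y r x b"
proof -
  obtain ys where ys: "ys \<noteq> []" "hd ys = a" "last ys = b" "set ys \<subseteq> Y"
    "\<forall>j. Suc j < length ys \<longrightarrow> d (ys ! j) (ys ! Suc j) < r"
    using assms(3) unfolding same_rcomp_def by blast
  show ?thesis unfolding same_rcomp_def
  proof (rule exI[of _ "x # ys"], intro conjI allI impI)
    fix j assume j: "Suc j < length (x # ys)"
    show "d ((x # ys) ! j) ((x # ys) ! Suc j) < r"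
    proof (cases j)
      case 0 then show ?thesis using ys assms by (cases ys) auto
    next
      case (Suc m) then show ?thesis using ys j by auto
    qed
  qed (use ys assms in auto)
qed

lemma src_trans_aux:
  "ys \<noteq> [] \<Longrightarrow> set ys \<subseteq> Y \<Longrightarrow> (\<forall>j. Suc j < length ys \<longrightarrow> d (ys ! j) (ys ! Suc j) < r)
   \<Longrightarrow> same_rcomp d Y r (last ys) c \<Longrightarrow> same_rcomp d Y r (hd ys) c"
proof (induction ys)
  case Nil then show ?case by simp
next
  case (Cons y ys)
  show ?case
  proof (cases ys)
    case Nil then show ?thesis using Cons by simp
  next
    case (Cons y' rest)
    have st: "\<forall>j. Suc j < length ys \<longrightarrow> d (ys ! j) (ys ! Suc j) < r"
    proof (intro allI impI)
      fix j assume "Suc j < length ys"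
      then show "d (ys ! j) (ys ! Suc j) < r" using Cons.prems(3)[rule_format, of "Suc j"] by simp
    qed
    have "same_rcomp d Y r (hd ys) c"
      using Cons.IH Cons.prems st \<open>ys = y' # rest\<close> by auto
    moreover have "d y (hd ys) < r" using Cons.prems(3)[rule_format, of 0] \<open>ys = y' # rest\<close> by simp
    ultimately show ?thesis using src_cons[of y Y d "hd ys" r c] Cons.prems by simp
  qed
qed

lemma src_trans:
  assumes "same_rcomp d Y r a b" "same_rcomp d Y r b c"
  shows "same_rcomp d Y r a c"
  using assms src_trans_aux unfolding same_rcomp_def[of d Y r a b] by metis

lemma l1_single:
  assumes "\<forall>i. i \<noteq> dd \<longrightarrow> x i = x' i" "\<bar>int (x dd) - int (x' dd)\<bar> \<le> 1"
  shows "l1dist n x x' \<le> 1"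
proof -
  have "l1dist n x x' \<le> (\<Sum>i<n. if i = dd then 1 else 0)"
    unfolding l1dist_def by (rule sum_mono) (use assms in auto)
  also have "\<dots> \<le> 1" by (simp add: sum.delta)
  finally show ?thesis .
qed

lemma box_conn:
  assumes "finite D"
  shows "\<And>x y. {i. x i \<noteq> y i} \<subseteq> D \<Longrightarrow> (\<forall>i. \<bar>int (x i) - int (y i)\<bar> \<le> 1) \<Longrightarrow>
     {z. \<forall>i. z i = x i \<or> z i = y i} \<subseteq> Y \<Longrightarrow> same_rcomp (l1dist n) Y 2 x y"
  using assms
proof (induction D rule: finite_induct)
  case empty
  then have "x = y" by auto
  moreover have "x \<in> Y" using empty.prems(3) by auto
  ultimately show ?case using src_refl by metis
next
  case (insert dd D)
  define x' where "x' = x(dd := y dd)"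
  have "{i. x' i \<noteq> y i} \<subseteq> D" using insert.prems(1) by (auto simp: x'_def)
  moreover have "\<forall>i. \<bar>int (x' i) - int (y i)\<bar> \<le> 1" using insert.prems(2) by (auto simp: x'_def)
  moreover have "{z. \<forall>i. z i = x' i \<or> z i = y i} \<subseteq> Y"
    using insert.prems(3) by (auto simp: x'_def)
  ultimately have c: "same_rcomp (l1dist n) Y 2 x' y" using insert.IH by blast
  have "x \<in> Y" using insert.prems(3) by auto
  moreover have "l1dist n x x' \<le> 1"
    by (rule l1_single[of dd]) (use insert.prems(2) in \<open>auto simp: x'_def\<close>)
  ultimately show ?case using src_cons[OF _ _ c] by force
qed

theorem lemma2p2:
  fixes n k :: nat and Xs :: "nat \<Rightarrow> (nat \<Rightarrow> nat) set"
  assumes "n \<ge> 1" and "k \<ge> 1"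
    and "\<forall>i<n. Xs i \<subseteq> grid n k"
    and "(\<Union>i<n. Xs i) = grid n k"
    and "\<forall>x\<in>grid n k. \<exists>i<n.
           {y \<in> grid n k. l1dist n x y < int n + 1} \<subseteq> Xs i"
  shows "\<exists>i<n. \<exists>a\<in>Xs i. \<exists>b\<in>Xs i.
           same_rcomp (l1dist n) (Xs i) 2 a b \<and> \<bar>int (a i) - int (b i)\<bar> = int k"
proof (rule ccontr)
  assume nc: "\<not> ?thesis"
  have nc': "\<bar>int (a i) - int (b i)\<bar> \<noteq> int k" if "i < n" "a \<in> Xs i" "b \<in> Xs i"
    "same_rcomp (l1dist n) (Xs i) 2 a b" for i a b
  proof
    assume h: "\<bar>int (a i) - int (b i)\<bar> = int k"
    have "\<exists>i<n. \<exists>a\<in>Xs i. \<exists>b\<in>Xs i.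
           same_rcomp (l1dist n) (Xs i) 2 a b \<and> \<bar>int (a i) - int (b i)\<bar> = int k"
      using that h by blast
    from nc this show False by (rule notE)
  qed
  define nz where "nz x = (\<lambda>i. if i < n then x i else 0)" for x :: "nat \<Rightarrow> nat"
  define C where "C i x = (\<exists>b\<in>Xs i. b i = k \<and> same_rcomp (l1dist n) (Xs i) 2 x b)" for i x
  define lab where "lab x i = (if nz x \<in> Xs i then (if C i (nz x) then 1 else 0)
      else (if nz x i = k then 1 else (0::nat)))" for x i
  have L1: "\<forall>x. (\<forall>i<n. x i \<le> k) \<longrightarrow> (\<forall>i<n. lab x i = 0 \<or> lab x i = 1)"
    unfolding lab_def by simp
  have L2: "\<forall>x. (\<forall>i<n. x i \<le> k) \<longrightarrow> (\<forall>i<n. x i = 0 \<longrightarrow> lab x i = 0)"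
  proof (intro allI impI)
    fix x i assume "\<forall>i<n. x i \<le> k" "i < n" "x i = 0"
    then have z: "nz x i = 0" by (simp add: nz_def)
    show "lab x i = 0"
    proof (cases "nz x \<in> Xs i \<and> C i (nz x)")
      case True
      then obtain b where "b \<in> Xs i" "b i = k" "same_rcomp (l1dist n) (Xs i) 2 (nz x) b"
        unfolding C_def by blast
      then have "\<bar>int (nz x i) - int (b i)\<bar> \<noteq> int k" using nc'[of i "nz x" b] True \<open>i < n\<close> by blast
      then show ?thesis using z \<open>b i = k\<close> by simp
    next
      case False then show ?thesis using z \<open>k \<ge> 1\<close> unfolding lab_def by simp
    qed
  qed
  have L3: "\<forall>x. (\<forall>i<n. x i \<le> k) \<longrightarrow> (\<forall>i<n. x i = k \<longrightarrow> lab x i = 1)"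
  proof (intro allI impI)
    fix x i assume "\<forall>i<n. x i \<le> k" "i < n" "x i = k"
    then have z: "nz x i = k" by (simp add: nz_def)
    show "lab x i = 1"
    proof (cases "nz x \<in> Xs i")
      case True
      have "same_rcomp (l1dist n) (Xs i) 2 (nz x) (nz x)" using True by (rule src_refl)
      then have "C i (nz x)" unfolding C_def using z True by blast
      then show ?thesis using True by (simp add: lab_def)
    next
      case False then show ?thesis using z unfolding lab_def by simp
    qed
  qed
  have k0: "0 < k" using assms(2) by simp
  obtain q where q1: "\<forall>i<n. q i < k"
    and q2: "\<forall>i<n. \<exists>r s. (\<forall>j<n. q j \<le> r j \<and> r j \<le> q j + 1) \<and> (\<forall>j<n. q j \<le> s j \<and> s j \<le> q j + 1) \<and> lab r i \<noteq> lab s i"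
    using kuhn_lemma[of k n lab, OF k0 L1 L2 L3] by blast
  define cell where "cell = {z. \<forall>j. if j < n then q j \<le> z j \<and> z j \<le> q j + 1 else z j = 0}"
  have qg: "nz q \<in> grid n k" using q1 by (auto simp: grid_def nz_def less_imp_le)
  then obtain j where j: "j < n" and ball: "{y \<in> grid n k. l1dist n (nz q) y < int n + 1} \<subseteq> Xs j"
    using assms(5) by blast
  have cellX: "cell \<subseteq> Xs j"
  proof
    fix z assume z: "z \<in> cell"
    have "z \<in> grid n k" unfolding grid_def
    proof (intro CollectI conjI allI impI)
      fix i assume "i < n"
      have "if i < n then q i \<le> z i \<and> z i \<le> q i + 1 else z i = 0" using z unfolding cell_def by blast
      then have "z i \<le> q i + 1" "q i < k" using q1 \<open>i < n\<close> by auto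
      then show "z i \<le> k" by linarith
    next
      fix i assume "n \<le> i"
      have "if i < n then q i \<le> z i \<and> z i \<le> q i + 1 else z i = 0" using z unfolding cell_def by blast
      then show "z i = 0" using \<open>n \<le> i\<close> by auto
    qed
    moreover have "l1dist n (nz q) z \<le> (\<Sum>i<n. 1)"
      unfolding l1dist_def
    proof (rule sum_mono)
      fix i assume "i \<in> {..<n}"
      have "if i < n then q i \<le> z i \<and> z i \<le> q i + 1 else z i = 0" using z unfolding cell_def by blast
      then have "q i \<le> z i" "z i \<le> q i + 1" using \<open>i \<in> {..<n}\<close> by auto
      then show "\<bar>int (nz q i) - int (z i)\<bar> \<le> 1" using \<open>i \<in> {..<n}\<close> by (auto simp: nz_def)
    qed
    ultimately show "z \<in> Xs j" using ball by auto
  qed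
  obtain r s where rs: "\<forall>j<n. q j \<le> r j \<and> r j \<le> q j + 1" "\<forall>j<n. q j \<le> s j \<and> s j \<le> q j + 1"
    "lab r j \<noteq> lab s j" using q2 j by blast
  have rc: "nz r \<in> cell" "nz s \<in> cell" using rs unfolding cell_def nz_def by auto
  have box: "{z. \<forall>i. z i = nz r i \<or> z i = nz s i} \<subseteq> cell"
  proof
    fix z assume "z \<in> {z. \<forall>i. z i = nz r i \<or> z i = nz s i}"
    then have z: "z i = nz r i \<or> z i = nz s i" for i by blast
    show "z \<in> cell" unfolding cell_def mem_Collect_eq
    proof
      fix i
      show "if i < n then q i \<le> z i \<and> z i \<le> q i + 1 else z i = 0"
        using z[of i] rs(1,2) by (cases "i < n") (auto simp: nz_def)
    qed
  qed
  have fin: "finite {..<n}" by simp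
  have D1: "{i. nz r i \<noteq> nz s i} \<subseteq> {..<n}" "{i. nz s i \<noteq> nz r i} \<subseteq> {..<n}"
    by (auto simp: nz_def split: if_splits)
  have bd: "\<forall>i. \<bar>int (nz r i) - int (nz s i)\<bar> \<le> 1" "\<forall>i. \<bar>int (nz s i) - int (nz r i)\<bar> \<le> 1"
  proof -
    have "\<bar>int (nz r i) - int (nz s i)\<bar> \<le> 1" for i
    proof (cases "i < n")
      case True
      then have "q i \<le> r i" "r i \<le> q i + 1" "q i \<le> s i" "s i \<le> q i + 1" using rs(1,2) by auto
      then show ?thesis using True by (simp add: nz_def)
    qed (simp add: nz_def)
    then show "\<forall>i. \<bar>int (nz r i) - int (nz s i)\<bar> \<le> 1" "\<forall>i. \<bar>int (nz s i) - int (nz r i)\<bar> \<le> 1"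
      by (auto simp: abs_minus_commute)
  qed
  have box2: "{z. \<forall>i. z i = nz s i \<or> z i = nz r i} \<subseteq> cell" using box by blast
  have c1: "same_rcomp (l1dist n) (Xs j) 2 (nz r) (nz s)"
    using box_conn[OF fin D1(1) bd(1)] box cellX by blast
  have c2: "same_rcomp (l1dist n) (Xs j) 2 (nz s) (nz r)"
    using box_conn[OF fin D1(2) bd(2)] box2 cellX by blast
  have "C j (nz r) = C j (nz s)"
  proof
    assume "C j (nz r)"
    then obtain b where "b \<in> Xs j" "b j = k" "same_rcomp (l1dist n) (Xs j) 2 (nz r) b" unfolding C_def by blast
    then show "C j (nz s)" unfolding C_def using src_trans[OF c2] by blast
  next
    assume "C j (nz s)"
    then obtain b where "b \<in> Xs j" "b j = k" "same_rcomp (l1dist n) (Xs j) 2 (nz s) b" unfolding C_def by blast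
    then show "C j (nz r)" unfolding C_def using src_trans[OF c1] by blast
  qed
  moreover have "nz r \<in> Xs j" "nz s \<in> Xs j" using rc cellX by auto
  ultimately have "lab r j = lab s j" by (simp add: lab_def)
  then show False using rs(3) by simp
qed

end
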